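(* Fix a half-integer $j\ge \tfrac12$ and a real number $l\in(0,1)$, and let $W_{j,l}$ be the effective Bianchi IX potential defined in the context, viewed as a function of $(q^0,q^+,q^-)$. Let $q^0_1\in\mathbb{R}$ and let $(q^+(q^0),q^-(q^0),\pi_+(q^0),\pi_-(q^0))$ be a solution, defined for all $q^0\le q^0_1$, of the internal-time equations of motion \[ \frac{dq^\pm}{dq^0}=\frac{\pi_\pm}{2\sqrt{h}},\qquad \frac{d\pi_\pm}{dq^0}=-\frac{1}{\sqrt{h}}\frac{\partial W_{j,l}}{\partial q^\pm},\qquad h:=\tfrac12(\pi_+^2+\pi_-^2)+2W_{j,l}(q^0,q^+,q^-), \] with $h>0$ along the solution. Then $R(q^0):=\sqrt{(q^+(q^0))^2+(q^-(q^0))^2}$ does not remain bounded as $q^0\to-\infty$; i.e., there is no $q^0_2\le q^0_1$ such that $R$ is bounded on $(-\infty,q^0_2]$.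
   Context: Effective potential. For $0<l<1$ define, for $q>0$, \[ F_l(q)=\Big(\tfrac{2l(l+1)(l+2)}{3}\Big)^{\frac{1}{l-1}}\Big[(l+1)\{(q+1)^{l+2}-|q-1|^{l+2}\}-(l+2)\,q\,\{(q+1)^{l+1}-\mathrm{sgn}(q-1)|q-1|^{l+1}\}\Big]^{\frac{1}{1-l}} . \] (It satisfies $F_l(q)\to q^{-1}$ behaviour for $q\gg1$ and $F_l(q)\approx (3q/(l+1))^{1/(1-l)}$ for $0<q\ll1$.) For $\mu=(\mu_1,\mu_2,\mu_3)$ with all $\mu_I>0$ define, for $\{I,J,K\}=\{1,2,3\}$, \[ \Gamma_I=\tfrac12\big(\mu_K F_l(\mu_J)+\mu_J F_l(\mu_K)-\mu_J\mu_K F_l(\mu_I)^2\big), \] and \[ W_{j,l}(\mu)=8j^2\big[\mu_1\mu_2(\Gamma_1\Gamma_2-\Gamma_3)+\mu_2\mu_3(\Gamma_2\Gamma_3-\Gamma_1)+\mu_3\mu_1(\Gamma_3\Gamma_1-\Gamma_2)\big]. \] Variables: with $Q:=e^{\frac{2}{\sqrt3}q^0}/(2j)$ (so $q^0=\tfrac1{\sqrt3}\ln(\text{volume})$ is the internal time, decreasing volume means $q^0$ decreasing), \[ \mu_1=Q\,e^{\frac{4}{\sqrt6}q^+},\quad \mu_2=Q\,e^{-\frac{2}{\sqrt6}q^++\sqrt2\,q^-},\quad \mu_3=Q\,e^{-\frac{2}{\sqrt6}q^+-\sqrt2\,q^-}, \] and $W_{j,l}(q^0,q^+,q^-)$ denotes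 $W_{j,l}$ evaluated at these $\mu_I$. The internal-time Hamiltonian is $\mathcal H=\sqrt h$, with $(q^\pm,\pi_\pm)$ canonically conjugate. *)

theory Defs
  imports "HOL-Analysis.Analysis"
begin

definition Fl :: "real \<Rightarrow> real \<Rightarrow> real" where
  "Fl l q =
     ((2 * l * (l + 1) * (l + 2)) / 3) powr (1 / (l - 1)) *
     ((l + 1) * ((q + 1) powr (l + 2) - \<bar>q - 1\<bar> powr (l + 2))
      - (l + 2) * q * ((q + 1) powr (l + 1) - sgn (q - 1) * \<bar>q - 1\<bar> powr (l + 1)))
     powr (1 / (1 - l))"

definition Gam :: "real \<Rightarrow> real \<Rightarrow> real \<Rightarrow> real \<Rightarrow> real" where
  "Gam l mI mJ mK = (mK * Fl l mJ + mJ * Fl l mK - mJ * mK * (Fl l mI)^2) / 2"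

definition Wmu :: "real \<Rightarrow> real \<Rightarrow> real \<Rightarrow> real \<Rightarrow> real \<Rightarrow> real" where
  "Wmu j l m1 m2 m3 =
     (let G1 = Gam l m1 m2 m3; G2 = Gam l m2 m3 m1; G3 = Gam l m3 m1 m2 in
      8 * j^2 * (m1 * m2 * (G1 * G2 - G3) + m2 * m3 * (G2 * G3 - G1) + m3 * m1 * (G3 * G1 - G2)))"

definition Wq :: "real \<Rightarrow> real \<Rightarrow> real \<Rightarrow> real \<Rightarrow> real \<Rightarrow> real" where
  "Wq j l q0 qp qm =
     (let Q = exp (2 / sqrt 3 * q0) / (2 * j) in
      Wmu j l (Q * exp (4 / sqrt 6 * qp))
              (Q * exp (- (2 / sqrt 6) * qp + sqrt 2 * qm))
              (Q * exp (- (2 / sqrt 6) * qp - sqrt 2 * qm)))"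

definition hq :: "real \<Rightarrow> real \<Rightarrow> real \<Rightarrow> real \<Rightarrow> real \<Rightarrow> real \<Rightarrow> real \<Rightarrow> real" where
  "hq j l q0 qp qm pp pm = (pp^2 + pm^2) / 2 + 2 * Wq j l q0 qp qm"

end

theory Submission
  imports Defs
begin


definition bF :: "real \<Rightarrow> real \<Rightarrow> real" where
  "bF l q = (l + 1) * ((q + 1) powr (l + 2) - (1 - q) powr (l + 2))
      - (l + 2) * q * ((q + 1) powr (l + 1) + (1 - q) powr (l + 1))"

definition bF' :: "real \<Rightarrow> real \<Rightarrow> real" where
  "bF' l q = (l + 1) * ((l+2) * (q + 1) powr (l + 1) + (l+2) * (1 - q) powr (l + 1))
      - (l + 2) * ((q + 1) powr (l + 1) + (1 - q) powr (l + 1))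
      - (l + 2) * q * ((l+1) * (q + 1) powr l - (l+1) * (1 - q) powr l)"

lemma bF_deriv:
  assumes "-1 < q" "q < 1"
  shows "(bF l has_real_derivative bF' l q) (at q)"
  using assms unfolding bF_def bF'_def
  apply (auto intro!: derivative_eq_intros simp: add.commute)
  done


lemma bF'_cont: "isCont (bF' l) 0"
  unfolding bF'_def
  by (auto intro!: continuous_intros)

lemma bF0: "bF l 0 = 0" by (simp add: bF_def)
lemma bF'0: "bF' l 0 = 2 * l * (l+2)" by (simp add: bF'_def algebra_simps)


lemma Fl_eq:
  assumes "0 < q" "q < 1"
  shows "Fl l q = ((2 * l * (l + 1) * (l + 2)) / 3) powr (1 / (l - 1)) * bF l q powr (1/(1-l))"
proof -
  have "\<bar>q - 1\<bar> = 1 - q" "sgn (q - 1) = -1" using assms by auto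
  then show ?thesis unfolding Fl_def bF_def by (simp add: add.commute)
qed

lemma F_props:
  assumes l: "0 < l" "l < 1"
  shows "\<exists>\<delta> c1 c2. 0 < \<delta> \<and> \<delta> < 1 \<and> 0 < c1 \<and> 0 < c2 \<and>
     (\<forall>x. 0 < x \<longrightarrow> x < \<delta> \<longrightarrow> (\<exists>D. (Fl l has_real_derivative D) (at x) \<and>
         0 \<le> x * D \<and> x * D \<le> 3 * (1/(1-l)) * Fl l x) \<and>
         c1 * x powr (1/(1-l)) \<le> Fl l x \<and> Fl l x \<le> c2 * x powr (1/(1-l)))"
proof -
  define p where "p = 1/(1-l)"
  define A where "A = ((2 * l * (l + 1) * (l + 2)) / 3) powr (1 / (l - 1))"
  define k where "k = l * (l+2)"
  have p: "p > 0" using l by (simp add: p_def)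
  have A: "A > 0" using l by (simp add: A_def)
  have k: "k > 0" using l by (simp add: k_def)
  have "bF' l \<midarrow>0\<rightarrow> bF' l 0" using bF'_cont isCont_def by blast
  from LIM_D[OF this k] obtain d0 where d0: "d0 > 0"
    and hd0: "\<And>x. x \<noteq> 0 \<and> norm (x - 0) < d0 \<Longrightarrow> norm (bF' l x - bF' l 0) < k" by blast
  define \<delta> where "\<delta> = min d0 (1/2)"
  have bd: "k \<le> bF' l x \<and> bF' l x \<le> 3 * k" if "0 \<le> x" "x < \<delta>" for x
  proof (cases "x = 0")
    case True then show ?thesis using k by (simp add: bF'0 k_def)
  next
    case False
    then have "\<bar>bF' l x - 2 * k\<bar> < k" using hd0[of x] that by (auto simp: \<delta>_def bF'0 k_def algebra_simps)
    then show ?thesis by auto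
  qed
  have bb: "k * x \<le> bF l x \<and> bF l x \<le> 3 * k * x" if "0 < x" "x < \<delta>" for x
  proof -
    have "\<exists>z. 0 < z \<and> z < x \<and> bF l x - bF l 0 = (x - 0) * bF' l z"
      by (rule MVT2) (use that in \<open>auto intro!: bF_deriv simp: \<delta>_def\<close>)
    then obtain z where z: "0 < z" "z < x" "bF l x = x * bF' l z" by (auto simp: bF0)
    have "k \<le> bF' l z \<and> bF' l z \<le> 3 * k" using bd[of z] z that by auto
    then show ?thesis using z that by (auto simp: mult.commute)
  qed
  define c1 where "c1 = A * k powr p"
  define c2 where "c2 = A * (3*k) powr p"
  have "\<forall>x. 0 < x \<longrightarrow> x < \<delta> \<longrightarrow> (\<exists>D. (Fl l has_real_derivative D) (at x) \<and>
         0 \<le> x * D \<and> x * D \<le> 3 * p * Fl l x) \<and>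
         c1 * x powr p \<le> Fl l x \<and> Fl l x \<le> c2 * x powr p"
  proof (intro allI impI conjI)
    fix x assume x: "0 < x" "x < \<delta>"
    then have x1: "x < 1" by (simp add: \<delta>_def)
    have bbx: "k * x \<le> bF l x" "bF l x \<le> 3 * k * x" using bb x by auto
    have bpos: "bF l x > 0" using bbx k x by (smt (verit) mult_pos_pos)
    have Fx: "Fl l x = A * bF l x powr p" using Fl_eq[OF x(1) x1] by (simp add: A_def p_def)
    have dF: "((\<lambda>y. A * bF l y powr p) has_real_derivative A * (p * bF l x powr (p - 1) * bF' l x)) (at x)"
      apply (intro DERIV_cmult)
      using DERIV_chain2[OF has_real_derivative_powr[OF bpos, of p] bF_deriv[of x l]] x x1
      by (simp add: mult.assoc)
    have dF2: "(Fl l has_real_derivative A * (p * bF l x powr (p - 1) * bF' l x)) (at x)"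
      apply (rule has_field_derivative_transform_within_open[OF dF, of "{0<..<1}"])
      using x x1 by (auto simp: Fl_eq A_def p_def)
    have bd': "k \<le> bF' l x" "bF' l x \<le> 3 * k" using bd x by auto
    have pw: "bF l x powr p = bF l x powr (p - 1) * bF l x"
      using bpos by (simp add: powr_diff)
    have pp: "bF l x powr (p - 1) > 0" using bpos by simp
    show "\<exists>D. (Fl l has_real_derivative D) (at x) \<and> 0 \<le> x * D \<and> x * D \<le> 3 * p * Fl l x"
    proof (intro exI conjI, rule dF2)
      show "0 \<le> x * (A * (p * bF l x powr (p - 1) * bF' l x))"
        using x A p pp bd' k by (intro mult_nonneg_nonneg) auto
      have "x * bF' l x \<le> x * (3 * k)" using x bd' by (intro mult_left_mono) auto
      then have "x * bF' l x \<le> 3 * bF l x" using bbx by (simp add: algebra_simps)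
      then have "(A * p * bF l x powr (p - 1)) * (x * bF' l x) \<le> (A * p * bF l x powr (p - 1)) * (3 * bF l x)"
        using A p pp by (intro mult_left_mono) auto
      then show "x * (A * (p * bF l x powr (p - 1) * bF' l x)) \<le> 3 * p * Fl l x"
        unfolding Fx pw by (simp add: algebra_simps)
    qed
    have "(k * x) powr p \<le> bF l x powr p" using bbx k x p by (intro powr_mono2) auto
    then show "c1 * x powr p \<le> Fl l x" unfolding Fx c1_def using A k x
      by (simp add: powr_mult)
    have "bF l x powr p \<le> (3 * k * x) powr p" using bbx k x p bpos by (intro powr_mono2) auto
    then show "Fl l x \<le> c2 * x powr p" unfolding Fx c2_def using A k x
      by (simp add: powr_mult)
  qed
  moreover have "0 < \<delta>" "\<delta> < 1" "0 < c1" "0 < c2" using d0 A k by (auto simp: \<delta>_def c1_def c2_def)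
  ultimately show ?thesis unfolding p_def by blast
qed



definition GamV :: "real \<Rightarrow> real \<Rightarrow> real \<Rightarrow> real \<Rightarrow> real \<Rightarrow> real \<Rightarrow> real" where
  "GamV xI xJ xK fI fJ fK = (xK*fJ + xJ*fK - xJ*xK*fI^2)/2"

definition dGamV :: "real \<Rightarrow> real \<Rightarrow> real \<Rightarrow> real \<Rightarrow> real \<Rightarrow> real \<Rightarrow> real \<Rightarrow> real \<Rightarrow> real \<Rightarrow> real \<Rightarrow> real \<Rightarrow> real \<Rightarrow> real" where
  "dGamV lI lJ lK xI xJ xK fI fJ fK gI gJ gK =
    (lK*xK*fJ + lJ*xK*gJ + lJ*xJ*fK + lK*xJ*gK - (lJ+lK)*xJ*xK*fI^2 - 2*lI*xJ*xK*fI*gI)/2"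

definition WV :: "real \<Rightarrow> real \<Rightarrow> real \<Rightarrow> real \<Rightarrow> real \<Rightarrow> real \<Rightarrow> real \<Rightarrow> real" where
  "WV j x1 x2 x3 f1 f2 f3 =
    8 * j^2 * (x1*x2*(GamV x1 x2 x3 f1 f2 f3 * GamV x2 x3 x1 f2 f3 f1 - GamV x3 x1 x2 f3 f1 f2)
     + x2*x3*(GamV x2 x3 x1 f2 f3 f1 * GamV x3 x1 x2 f3 f1 f2 - GamV x1 x2 x3 f1 f2 f3)
     + x3*x1*(GamV x3 x1 x2 f3 f1 f2 * GamV x1 x2 x3 f1 f2 f3 - GamV x2 x3 x1 f2 f3 f1))"

definition DWV :: "real \<Rightarrow> real \<Rightarrow> real \<Rightarrow> real \<Rightarrow> real \<Rightarrow> real \<Rightarrow> real \<Rightarrow> real \<Rightarrow> real \<Rightarrow> real \<Rightarrow> real \<Rightarrow> real \<Rightarrow> real \<Rightarrow> real" where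
  "DWV j l1 l2 l3 x1 x2 x3 f1 f2 f3 g1 g2 g3 =
    (let G1 = GamV x1 x2 x3 f1 f2 f3; G2 = GamV x2 x3 x1 f2 f3 f1; G3 = GamV x3 x1 x2 f3 f1 f2;
         D1 = dGamV l1 l2 l3 x1 x2 x3 f1 f2 f3 g1 g2 g3;
         D2 = dGamV l2 l3 l1 x2 x3 x1 f2 f3 f1 g2 g3 g1;
         D3 = dGamV l3 l1 l2 x3 x1 x2 f3 f1 f2 g3 g1 g2 in
    8 * j^2 * ((l1+l2)*x1*x2*(G1*G2-G3) + x1*x2*(D1*G2 + G1*D2 - D3)
     + (l2+l3)*x2*x3*(G2*G3-G1) + x2*x3*(D2*G3 + G2*D3 - D1)
     + (l3+l1)*x3*x1*(G3*G1-G2) + x3*x1*(D3*G1 + G3*D1 - D2)))"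

lemma Wmu_WV: "Wmu j l m1 m2 m3 = WV j m1 m2 m3 (Fl l m1) (Fl l m2) (Fl l m3)"
  unfolding Wmu_def WV_def Gam_def GamV_def Let_def by simp

lemma Wmu_deriv:
  assumes X1: "(X1 has_real_derivative (a1 * X1 s)) (at s)"
    and X2: "(X2 has_real_derivative (a2 * X2 s)) (at s)"
    and X3: "(X3 has_real_derivative (a3 * X3 s)) (at s)"
    and F1: "(Fl l has_real_derivative D1) (at (X1 s))"
    and F2: "(Fl l has_real_derivative D2) (at (X2 s))"
    and F3: "(Fl l has_real_derivative D3) (at (X3 s))"
  shows "((\<lambda>s. Wmu j l (X1 s) (X2 s) (X3 s)) has_real_derivative
     DWV j a1 a2 a3 (X1 s) (X2 s) (X3 s) (Fl l (X1 s)) (Fl l (X2 s)) (Fl l (X3 s))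
        (X1 s * D1) (X2 s * D2) (X3 s * D3)) (at s)"
proof -
  have C1: "((\<lambda>s. Fl l (X1 s)) has_real_derivative D1 * (a1 * X1 s)) (at s)"
    by (rule DERIV_chain2[OF F1 X1])
  have C2: "((\<lambda>s. Fl l (X2 s)) has_real_derivative D2 * (a2 * X2 s)) (at s)"
    by (rule DERIV_chain2[OF F2 X2])
  have C3: "((\<lambda>s. Fl l (X3 s)) has_real_derivative D3 * (a3 * X3 s)) (at s)"
    by (rule DERIV_chain2[OF F3 X3])
  show ?thesis
    unfolding Wmu_WV WV_def GamV_def
    apply (rule derivative_eq_intros C1 C2 C3 X1 X2 X3 refl | simp only: zero_neq_numeral not_False_eq_True)+
    unfolding DWV_def dGamV_def GamV_def Let_def
    by (simp add: field_simps power2_eq_square)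
qed



lemma absmul: "\<bar>a\<bar> \<le> A \<Longrightarrow> \<bar>b\<bar> \<le> B \<Longrightarrow> \<bar>a * b\<bar> \<le> A * (B::real)"
  by (simp add: abs_mult mult_mono')

lemma prodle: "0 \<le> a \<Longrightarrow> a \<le> A \<Longrightarrow> 0 \<le> b \<Longrightarrow> b \<le> B \<Longrightarrow> a * b \<le> A * (B::real)"
  by (simp add: mult_mono')

lemma Gam_bound:
  assumes "0 \<le> xJ" "xJ \<le> t" "0 \<le> xK" "xK \<le> t" "0 \<le> fI" "fI \<le> \<phi>" "0 \<le> fJ" "fJ \<le> \<phi>" "0 \<le> fK" "fK \<le> \<phi>"
    "t \<le> 1" "\<phi> \<le> 1"
  shows "\<bar>GamV xI xJ xK fI fJ fK\<bar> \<le> 3/2 * (t * \<phi>)"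
proof -
  have a: "xK * fJ \<le> t * \<phi>" "xJ * fK \<le> t * \<phi>" using assms by (auto intro: prodle)
  have b0: "xJ * xK \<le> t * t" "fI^2 \<le> \<phi> * \<phi>" using assms by (auto intro: prodle simp: power2_eq_square)
  have "xJ * xK * fI^2 \<le> (t * t) * (\<phi> * \<phi>)" using b0 assms by (intro prodle) auto
  also have "\<dots> = (t * \<phi>) * (t * \<phi>)" by simp
  also have "\<dots> \<le> (t * \<phi>) * 1" using assms by (intro mult_left_mono) (auto intro: mult_le_one)
  finally have b: "xJ * xK * fI^2 \<le> t * \<phi>" by simp
  have c: "0 \<le> xK * fJ" "0 \<le> xJ * fK" "0 \<le> xJ * xK * fI^2" using assms by auto
  show ?thesis unfolding GamV_def using a b c by (auto simp: abs_le_iff)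
qed

lemma dGam_bound:
  assumes "0 \<le> xI" "xI \<le> t" "0 \<le> xJ" "xJ \<le> t" "0 \<le> xK" "xK \<le> t"
    "0 \<le> fI" "fI \<le> \<phi>" "0 \<le> fJ" "fJ \<le> \<phi>" "0 \<le> fK" "fK \<le> \<phi>"
    "0 \<le> gI" "gI \<le> P * fI" "0 \<le> gJ" "gJ \<le> P * fJ" "0 \<le> gK" "gK \<le> P * fK"
    "\<bar>lI\<bar> \<le> L" "\<bar>lJ\<bar> \<le> L" "\<bar>lK\<bar> \<le> L"
    "t \<le> 1" "\<phi> \<le> 1" "0 \<le> P"
  shows "\<bar>dGamV lI lJ lK xI xJ xK fI fJ fK gI gJ gK\<bar> \<le> (2 + 2*P) * L * (t * \<phi>)"
proof -
  have L: "0 \<le> L" using assms by linarith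
  have tp: "0 \<le> t * \<phi>" "t * \<phi> \<le> 1" using assms by (auto intro: mult_le_one)
  have gb: "\<bar>gI\<bar> \<le> P * \<phi>" "\<bar>gJ\<bar> \<le> P * \<phi>" "\<bar>gK\<bar> \<le> P * \<phi>"
    using assms by (auto intro!: order.trans[OF _ mult_left_mono[of _ \<phi> P]])
  have xb: "\<bar>xI\<bar> \<le> t" "\<bar>xJ\<bar> \<le> t" "\<bar>xK\<bar> \<le> t" using assms by auto
  have fb: "\<bar>fI\<bar> \<le> \<phi>" "\<bar>fJ\<bar> \<le> \<phi>" "\<bar>fK\<bar> \<le> \<phi>" using assms by auto
  have l2: "\<bar>lJ + lK\<bar> \<le> 2 * L" using assms by auto
  have l3: "\<bar>2 * lI\<bar> \<le> 2 * L" using assms by auto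
  have e1: "\<bar>lK*xK*fJ\<bar> \<le> L * t * \<phi>" by (intro absmul xb fb assms)
  have e2: "\<bar>lJ*xK*gJ\<bar> \<le> L * t * (P * \<phi>)" by (intro absmul xb gb assms)
  have e3: "\<bar>lJ*xJ*fK\<bar> \<le> L * t * \<phi>" by (intro absmul xb fb assms)
  have e4: "\<bar>lK*xJ*gK\<bar> \<le> L * t * (P * \<phi>)" by (intro absmul xb gb assms)
  have e5: "\<bar>(lJ+lK)*xJ*xK*fI^2\<bar> \<le> 2 * L * t * t * (\<phi> * \<phi>)"
    unfolding power2_eq_square mult.assoc[symmetric] by (intro absmul xb fb l2)
  have e6: "\<bar>2*lI*xJ*xK*fI*gI\<bar> \<le> 2 * L * t * t * \<phi> * (P * \<phi>)"
    by (intro absmul xb fb gb l3)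
  have "2 * L * t * t * (\<phi> * \<phi>) = 2 * L * (t * \<phi>) * (t * \<phi>)" by simp
  also have "\<dots> \<le> 2 * L * (t * \<phi>) * 1" using tp L by (intro mult_left_mono) auto
  finally have e5': "\<bar>(lJ+lK)*xJ*xK*fI^2\<bar> \<le> 2 * L * (t * \<phi>)" using e5 by simp
  have "2 * L * t * t * \<phi> * (P * \<phi>) = 2 * L * P * (t * \<phi>) * (t * \<phi>)" by simp
  also have "\<dots> \<le> 2 * L * P * (t * \<phi>) * 1" using tp L assms by (intro mult_left_mono) auto
  finally have e6': "\<bar>2*lI*xJ*xK*fI*gI\<bar> \<le> 2 * L * P * (t * \<phi>)" using e6 by simp
  have "\<bar>dGamV lI lJ lK xI xJ xK fI fJ fK gI gJ gK\<bar> \<le>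
     (\<bar>lK*xK*fJ\<bar> + \<bar>lJ*xK*gJ\<bar> + \<bar>lJ*xJ*fK\<bar> + \<bar>lK*xJ*gK\<bar> + \<bar>(lJ+lK)*xJ*xK*fI^2\<bar> + \<bar>2*lI*xJ*xK*fI*gI\<bar>)/2"
    unfolding dGamV_def by (simp add: abs_le_iff; linarith?)
  also have "\<dots> \<le> (2 + 2*P) * L * (t * \<phi>)"
    using e1 e2 e3 e4 e5' e6' by (simp add: algebra_simps)
  finally show ?thesis .
qed


lemma scale8: "\<bar>S\<bar> \<le> K \<Longrightarrow> \<bar>8*j^2*S\<bar> \<le> 8*j^2*(K::real)"
  by (simp add: abs_mult mult_left_mono)

lemma le3: "a \<le> X + X + X \<Longrightarrow> a \<le> 3 * (X::real)" by linarith

lemma tri3: "\<bar>a + b + c\<bar> \<le> \<bar>a\<bar> + \<bar>b\<bar> + \<bar>(c::real)\<bar>" by arith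

lemma comb_piece:
  fixes G1 G2 G3 D1 D2 D3 l1 l2 x1 x2 :: real
  assumes "\<bar>G1\<bar> \<le> \<gamma>" "\<bar>G2\<bar> \<le> \<gamma>" "\<bar>G3\<bar> \<le> \<gamma>" "\<bar>D1\<bar> \<le> d" "\<bar>D2\<bar> \<le> d" "\<bar>D3\<bar> \<le> d"
    "\<bar>l1\<bar> \<le> L" "\<bar>l2\<bar> \<le> L" "\<bar>x1\<bar> \<le> t" "\<bar>x2\<bar> \<le> t"
  shows "\<bar>(l1+l2)*x1*x2*(G1*G2-G3) + x1*x2*(D1*G2 + G1*D2 - D3)\<bar> \<le> 2*L*t*t*(\<gamma>*\<gamma>+\<gamma>) + t*t*(2*d*\<gamma>+d)"
proof -
  have "\<bar>G1*G2-G3\<bar> \<le> \<gamma>*\<gamma>+\<gamma>"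
    using absmul[OF assms(1,2)] assms(3) by (simp add: abs_le_iff; linarith?)
  moreover have "\<bar>l1+l2\<bar> \<le> 2*L" using abs_triangle_ineq[of l1 l2] assms(7,8) by linarith
  ultimately have a: "\<bar>(l1+l2)*x1*x2*(G1*G2-G3)\<bar> \<le> 2*L*t*t*(\<gamma>*\<gamma>+\<gamma>)"
    by (intro absmul assms)
  have "\<bar>D1*G2 + G1*D2 - D3\<bar> \<le> 2*d*\<gamma>+d"
    using absmul[OF assms(4,2)] absmul[OF assms(1,5)] assms(6) by (simp add: abs_le_iff mult.commute[of \<gamma> d]; linarith?)
  then have b: "\<bar>x1*x2*(D1*G2 + G1*D2 - D3)\<bar> \<le> t*t*(2*d*\<gamma>+d)"
    by (intro absmul assms)
  show ?thesis using a b by (simp add: abs_le_iff; linarith?)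
qed

lemma W_piece:
  fixes G1 G2 G3 x1 x2 :: real
  assumes "\<bar>G1\<bar> \<le> \<gamma>" "\<bar>G2\<bar> \<le> \<gamma>" "\<bar>G3\<bar> \<le> \<gamma>" "\<bar>x1\<bar> \<le> t" "\<bar>x2\<bar> \<le> t"
  shows "\<bar>x1*x2*(G1*G2-G3)\<bar> \<le> t*t*(\<gamma>*\<gamma>+\<gamma>)"
proof -
  have "\<bar>G1*G2-G3\<bar> \<le> \<gamma>*\<gamma>+\<gamma>"
    using absmul[OF assms(1,2)] assms(3) by (simp add: abs_le_iff; linarith?)
  then show ?thesis by (intro absmul assms)
qed

locale bnds =
  fixes x1 x2 x3 f1 f2 f3 g1 g2 g3 t \<phi> P :: real
  assumes x: "0 \<le> x1" "x1 \<le> t" "0 \<le> x2" "x2 \<le> t" "0 \<le> x3" "x3 \<le> t"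
    and f: "0 \<le> f1" "f1 \<le> \<phi>" "0 \<le> f2" "f2 \<le> \<phi>" "0 \<le> f3" "f3 \<le> \<phi>"
    and g: "0 \<le> g1" "g1 \<le> P * f1" "0 \<le> g2" "g2 \<le> P * f2" "0 \<le> g3" "g3 \<le> P * f3"
    and t1: "t \<le> 1" and p1: "\<phi> \<le> 1" and P: "0 \<le> P"
begin

lemma tp: "0 \<le> t * \<phi>" "t * \<phi> \<le> 1" using x f t1 p1 by (auto intro: mult_le_one)

lemma G_bounds:
  "\<bar>GamV x1 x2 x3 f1 f2 f3\<bar> \<le> 3/2 * (t * \<phi>)"
  "\<bar>GamV x2 x3 x1 f2 f3 f1\<bar> \<le> 3/2 * (t * \<phi>)"
  "\<bar>GamV x3 x1 x2 f3 f1 f2\<bar> \<le> 3/2 * (t * \<phi>)"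
  by (rule Gam_bound; use x f t1 p1 in auto)+

lemma W_bound: "\<bar>WV j x1 x2 x3 f1 f2 f3\<bar> \<le> 8 * j^2 * (12 * (t^3 * \<phi>))"
proof -
  let ?g = "3/2 * (t * \<phi>)"
  have xb: "\<bar>x1\<bar> \<le> t" "\<bar>x2\<bar> \<le> t" "\<bar>x3\<bar> \<le> t" using x by auto
  note G = G_bounds
  have "\<bar>x1*x2*(GamV x1 x2 x3 f1 f2 f3 * GamV x2 x3 x1 f2 f3 f1 - GamV x3 x1 x2 f3 f1 f2)
     + x2*x3*(GamV x2 x3 x1 f2 f3 f1 * GamV x3 x1 x2 f3 f1 f2 - GamV x1 x2 x3 f1 f2 f3)
     + x3*x1*(GamV x3 x1 x2 f3 f1 f2 * GamV x1 x2 x3 f1 f2 f3 - GamV x2 x3 x1 f2 f3 f1)\<bar>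
     \<le> 3 * (t*t*(?g*?g+?g))"
    using order.trans[OF tri3 add_mono[OF add_mono[OF W_piece[OF G(1) G(2) G(3) xb(1) xb(2)] W_piece[OF G(2) G(3) G(1) xb(2) xb(3)]]
      W_piece[OF G(3) G(1) G(2) xb(3) xb(1)]]]
    by simp
  also have "\<dots> = 3 * (t*t*(t*\<phi>)) * (9/4*(t*\<phi>) + 3/2)" by (simp add: algebra_simps)
  also have "\<dots> \<le> 3 * (t*t*(t*\<phi>)) * 4"
    using tp x by (intro mult_left_mono) auto
  also have "\<dots> = 12 * (t^3 * \<phi>)" by (simp add: power3_eq_cube)
  finally show ?thesis unfolding WV_def by (rule scale8)
qed

lemma DW_bound:
  assumes l: "\<bar>l1\<bar> \<le> L" "\<bar>l2\<bar> \<le> L" "\<bar>l3\<bar> \<le> L"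
  shows "\<bar>DWV j l1 l2 l3 x1 x2 x3 f1 f2 f3 g1 g2 g3\<bar> \<le> 8 * j^2 * (3 * (8*L + 4*((2+2*P)*L)) * (t^3 * \<phi>))"
proof -
  let ?g = "3/2 * (t * \<phi>)" and ?d = "(2 + 2*P) * L * (t * \<phi>)"
  have L: "0 \<le> L" using l by linarith
  have xb: "\<bar>x1\<bar> \<le> t" "\<bar>x2\<bar> \<le> t" "\<bar>x3\<bar> \<le> t" using x by auto
  note G = G_bounds
  have D1: "\<bar>dGamV l1 l2 l3 x1 x2 x3 f1 f2 f3 g1 g2 g3\<bar> \<le> ?d"
    using x f g t1 p1 P l by (intro dGam_bound) auto
  have D2: "\<bar>dGamV l2 l3 l1 x2 x3 x1 f2 f3 f1 g2 g3 g1\<bar> \<le> ?d"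
    using x f g t1 p1 P l by (intro dGam_bound) auto
  have D3: "\<bar>dGamV l3 l1 l2 x3 x1 x2 f3 f1 f2 g3 g1 g2\<bar> \<le> ?d"
    using x f g t1 p1 P l by (intro dGam_bound) auto
  have "\<bar>DWV j l1 l2 l3 x1 x2 x3 f1 f2 f3 g1 g2 g3\<bar> \<le> 8*j^2 * (3 * (2*L*t*t*(?g*?g+?g) + t*t*(2*?d*?g+?d)))"
    unfolding DWV_def Let_def
    apply (rule scale8)
    using order.trans[OF tri3 add_mono[OF add_mono[OF comb_piece[OF G(1) G(2) G(3) D1 D2 D3 l(1) l(2) xb(1) xb(2)]
      comb_piece[OF G(2) G(3) G(1) D2 D3 D1 l(2) l(3) xb(2) xb(3)]]
      comb_piece[OF G(3) G(1) G(2) D3 D1 D2 l(3) l(1) xb(3) xb(1)]]]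
    by (simp add: add.assoc)
  note S = this
  have E: "3 * (2*L*t*t*(?g*?g+?g) + t*t*(2*?d*?g+?d)) =
     3 * (t*t*(t*\<phi>)) * (2*L*(9/4*(t*\<phi>) + 3/2) + (2+2*P)*L*(3*(t*\<phi>) + 1))"
    by (simp add: algebra_simps)
  have F: "3 * (t*t*(t*\<phi>)) * (2*L*(9/4*(t*\<phi>) + 3/2) + (2+2*P)*L*(3*(t*\<phi>) + 1)) \<le> 3 * (t*t*(t*\<phi>)) * (2*L*4 + (2+2*P)*L*4)"
    using tp x L P by (intro mult_left_mono add_mono) auto
  have H: "3 * (2*L*t*t*(?g*?g+?g) + t*t*(2*?d*?g+?d)) \<le> 3 * (8*L + 4*((2+2*P)*L)) * (t^3 * \<phi>)"
    using E F by (simp add: power3_eq_cube algebra_simps)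
  show ?thesis
    using order.trans[OF S mult_left_mono[OF H]] by simp
qed

lemma Bterm:
  assumes "0 \<le> xI" "xI \<le> t" "0 \<le> xJ" "xJ \<le> t" "0 \<le> fI" "0 \<le> fJ" "0 \<le> fK" "fK \<le> \<phi>"
    "0 \<le> gI" "0 \<le> gJ" "0 \<le> gK" "gK \<le> P * fK"
  shows "-(xI*xJ*(2*GamV xK xI xJ fK fI fJ + dGamV 1 1 1 xK xI xJ fK fI fJ gK gI gJ))
     \<le> -(3/2)*(xI*xJ*(xJ*fI)) + (2+P)*(t^4*\<phi>^2)"
proof -
  have e: "2*GamV xK xI xJ fK fI fJ + dGamV 1 1 1 xK xI xJ fK fI fJ gK gI gJ =
     3/2*(xJ*fI) + (3/2*(xI*fJ) + (xJ*gI + xI*gJ)/2) - xI*xJ*(2*fK^2 + fK*gK)"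
    unfolding GamV_def dGamV_def by (simp add: field_simps power2_eq_square)
  have n1: "0 \<le> 3/2*(xI*fJ) + (xJ*gI + xI*gJ)/2" using assms by simp
  have "fK*gK \<le> fK * (P*fK)" using assms by (intro mult_left_mono) auto
  then have "2*fK^2 + fK*gK \<le> (2+P)*fK^2" by (simp add: algebra_simps power2_eq_square)
  also have "\<dots> \<le> (2+P)*\<phi>^2" using assms P by (intro mult_left_mono power_mono) auto
  finally have n2: "2*fK^2 + fK*gK \<le> (2+P)*\<phi>^2" .
  have xx: "0 \<le> xI*xJ" "xI*xJ \<le> t*t" using assms by (auto intro: prodle)
  have "xI*xJ*(2*fK^2 + fK*gK) \<le> (t*t)*((2+P)*\<phi>^2)"
    using xx n2 assms by (intro prodle) auto
  then have "(xI*xJ)*(xI*xJ*(2*fK^2 + fK*gK)) \<le> (t*t)*((t*t)*((2+P)*\<phi>^2))"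
    using xx n2 assms P by (intro prodle) auto
  then have n3: "(xI*xJ)*(xI*xJ*(2*fK^2 + fK*gK)) \<le> (2+P)*(t^4*\<phi>^2)"
    by (simp add: power4_eq_xxxx power2_eq_square algebra_simps)
  have n4: "0 \<le> xI*xJ*(3/2*(xI*fJ) + (xJ*gI + xI*gJ)/2)" using xx n1 by simp
  show ?thesis unfolding e using n3 n4 by (simp add: algebra_simps)
qed

lemma DW_sign:
  "DWV j 1 1 1 x1 x2 x3 f1 f2 f3 g1 g2 g3 \<le>
     8*j^2 * (-(3/2)*(x1*x2*(x2*f1)) + (3*(9/2 + 3*(2+2*P)) + 3*(2+P)) * (t^4*\<phi>^2))"
proof -
  let ?G1 = "GamV x1 x2 x3 f1 f2 f3" and ?G2 = "GamV x2 x3 x1 f2 f3 f1" and ?G3 = "GamV x3 x1 x2 f3 f1 f2"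
  let ?D1 = "dGamV 1 1 1 x1 x2 x3 f1 f2 f3 g1 g2 g3" and ?D2 = "dGamV 1 1 1 x2 x3 x1 f2 f3 f1 g2 g3 g1"
    and ?D3 = "dGamV 1 1 1 x3 x1 x2 f3 f1 f2 g3 g1 g2"
  let ?A = "(2*x1*x2*?G1*?G2 + x1*x2*(?D1*?G2 + ?G1*?D2)) + (2*x2*x3*?G2*?G3 + x2*x3*(?D2*?G3 + ?G2*?D3))
      + (2*x3*x1*?G3*?G1 + x3*x1*(?D3*?G1 + ?G3*?D1))"
  let ?B1 = "-(x1*x2*(2*?G3 + ?D3))" and ?B2 = "-(x2*x3*(2*?G1 + ?D1))" and ?B3 = "-(x3*x1*(2*?G2 + ?D2))"
  have eq: "DWV j 1 1 1 x1 x2 x3 f1 f2 f3 g1 g2 g3 = 8*j^2 * (?A + (?B1 + ?B2 + ?B3))"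
    unfolding DWV_def Let_def by (simp add: algebra_simps)
  let ?u = "t * \<phi>" let ?g = "3/2 * ?u" and ?d = "(2 + 2*P) * 1 * ?u"
  note G = G_bounds
  have l1: "\<bar>1::real\<bar> \<le> 1" by simp
  have D1: "\<bar>?D1\<bar> \<le> ?d" using x f g t1 p1 P by (intro dGam_bound) auto
  have D2: "\<bar>?D2\<bar> \<le> ?d" using x f g t1 p1 P by (intro dGam_bound) auto
  have D3: "\<bar>?D3\<bar> \<le> ?d" using x f g t1 p1 P by (intro dGam_bound) auto
  have xb: "\<bar>x1\<bar> \<le> t" "\<bar>x2\<bar> \<le> t" "\<bar>x3\<bar> \<le> t" using x by auto
  have Ap: "\<bar>2*xI*xJ*GI*GJ + xI*xJ*(DI*GJ + GI*DJ)\<bar> \<le> 2*t*t*(?g*?g) + t*t*(?d*?g + ?g*?d)"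
    if "\<bar>xI\<bar> \<le> t" "\<bar>xJ\<bar> \<le> t" "\<bar>GI\<bar> \<le> ?g" "\<bar>GJ\<bar> \<le> ?g" "\<bar>DI\<bar> \<le> ?d" "\<bar>DJ\<bar> \<le> ?d"
    for xI xJ GI GJ DI DJ
  proof -
    have a: "\<bar>2*xI*xJ*GI*GJ\<bar> \<le> 2*t*t*?g*?g"
      by (intro absmul that) simp
    have "\<bar>DI*GJ + GI*DJ\<bar> \<le> ?d*?g + ?g*?d"
      using absmul[OF that(5,4)] absmul[OF that(3,6)] abs_triangle_ineq[of "DI*GJ" "GI*DJ"] by linarith
    then have b: "\<bar>xI*xJ*(DI*GJ + GI*DJ)\<bar> \<le> t*t*(?d*?g + ?g*?d)"
      by (intro absmul that)
    show ?thesis using a b abs_triangle_ineq by (smt (verit) mult.assoc)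
  qed
  have "\<bar>?A\<bar> \<le> (2*t*t*(?g*?g) + t*t*(?d*?g + ?g*?d)) + (2*t*t*(?g*?g) + t*t*(?d*?g + ?g*?d)) + (2*t*t*(?g*?g) + t*t*(?d*?g + ?g*?d))"
    by (rule order.trans[OF tri3 add_mono[OF add_mono[OF Ap[OF xb(1) xb(2) G(1) G(2) D1 D2] Ap[OF xb(2) xb(3) G(2) G(3) D2 D3]]
      Ap[OF xb(3) xb(1) G(3) G(1) D3 D1]]])
  then have A: "\<bar>?A\<bar> \<le> 3*(2*t*t*(?g*?g) + t*t*(?d*?g + ?g*?d))" by (rule le3)
  have A2: "3*(2*t*t*(?g*?g) + t*t*(?d*?g + ?g*?d)) = 3*(9/2 + 3*(2+2*P)) * (t^4*\<phi>^2)"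
    by (simp add: algebra_simps power2_eq_square power4_eq_xxxx)
  have B1: "?B1 \<le> -(3/2)*(x1*x2*(x2*f1)) + (2+P)*(t^4*\<phi>^2)"
    using x f g by (intro Bterm) auto
  have B2: "?B2 \<le> -(3/2)*(x2*x3*(x3*f2)) + (2+P)*(t^4*\<phi>^2)"
    using x f g by (intro Bterm) auto
  have B3: "?B3 \<le> -(3/2)*(x3*x1*(x1*f3)) + (2+P)*(t^4*\<phi>^2)"
    using x f g by (intro Bterm) auto
  have p2: "0 \<le> x2*x3*(x3*f2)" "0 \<le> x3*x1*(x1*f3)" using x f by auto
  have "?A + (?B1 + ?B2 + ?B3) \<le> -(3/2)*(x1*x2*(x2*f1)) + (3*(9/2 + 3*(2+2*P)) + 3*(2+P)) * (t^4*\<phi>^2)"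
    using A A2 B1 B2 B3 p2 by (simp add: abs_le_iff algebra_simps; linarith?)
  then show ?thesis unfolding eq by (intro mult_left_mono) auto
qed

end



lemma dG_lin:
  "dGamV (c*1 + u*a1 + w*b1) (c*1 + u*a2 + w*b2) (c*1 + u*a3 + w*b3) xI xJ xK fI fJ fK gI gJ gK =
   c * dGamV 1 1 1 xI xJ xK fI fJ fK gI gJ gK + u * dGamV a1 a2 a3 xI xJ xK fI fJ fK gI gJ gK
   + w * dGamV b1 b2 b3 xI xJ xK fI fJ fK gI gJ gK"
  unfolding dGamV_def by (simp add: field_simps)

lemma DWV_lin:
  "DWV j (c*1 + u*a1 + w*b1) (c*1 + u*a2 + w*b2) (c*1 + u*a3 + w*b3) x1 x2 x3 f1 f2 f3 g1 g2 g3 =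
   c * DWV j 1 1 1 x1 x2 x3 f1 f2 f3 g1 g2 g3 + u * DWV j a1 a2 a3 x1 x2 x3 f1 f2 f3 g1 g2 g3
   + w * DWV j b1 b2 b3 x1 x2 x3 f1 f2 f3 g1 g2 g3"
  unfolding DWV_def Let_def dG_lin by (simp add: algebra_simps)

definition e1 :: "real \<Rightarrow> real \<Rightarrow> real" where "e1 x y = 4 / sqrt 6 * x"
definition e2 :: "real \<Rightarrow> real \<Rightarrow> real" where "e2 x y = - (2 / sqrt 6) * x + sqrt 2 * y"
definition e3 :: "real \<Rightarrow> real \<Rightarrow> real" where "e3 x y = - (2 / sqrt 6) * x - sqrt 2 * y"
definition Qf :: "real \<Rightarrow> real \<Rightarrow> real" where "Qf j s = exp (2 / sqrt 3 * s) / (2 * j)"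

lemma Wq_eq: "Wq j l s x y = Wmu j l (Qf j s * exp (e1 x y)) (Qf j s * exp (e2 x y)) (Qf j s * exp (e3 x y))"
  unfolding Wq_def Qf_def e1_def e2_def e3_def Let_def by simp

lemma e_bounds:
  assumes "\<bar>x\<bar> \<le> B" "\<bar>y\<bar> \<le> B"
  shows "\<bar>e1 x y\<bar> \<le> 3 * B" "\<bar>e2 x y\<bar> \<le> 3 * B" "\<bar>e3 x y\<bar> \<le> 3 * B"
proof -
  have s6: "sqrt 6 \<ge> 2" by (rule real_le_rsqrt) simp
  have s2: "sqrt 2 \<le> 3/2" by (rule power2_le_imp_le) (simp_all add: power2_eq_square)
  have p6: "0 < sqrt 6" by simp
  have a: "\<bar>4 / sqrt 6\<bar> \<le> 2" "\<bar>2 / sqrt 6\<bar> \<le> 1" "\<bar>sqrt 2\<bar> \<le> 3/2" using s6 p6 s2 by (simp_all add: divide_le_eq)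
  have B: "0 \<le> B" using assms by linarith
  have h1: "\<bar>4 / sqrt 6 * x\<bar> \<le> 2 * B" unfolding abs_mult
    by (rule mult_mono[OF a(1) assms(1)]) auto
  have h2: "\<bar>2 / sqrt 6 * x\<bar> \<le> 1 * B" unfolding abs_mult
    by (rule mult_mono[OF a(2) assms(1)]) auto
  have h3: "\<bar>sqrt 2 * y\<bar> \<le> 3/2 * B" unfolding abs_mult
    by (rule mult_mono[OF a(3) assms(2)]) auto
  show "\<bar>e1 x y\<bar> \<le> 3 * B" using h1 B by (simp add: e1_def)
  show "\<bar>e2 x y\<bar> \<le> 3 * B" using h2 h3 unfolding e2_def by linarith
  show "\<bar>e3 x y\<bar> \<le> 3 * B" using h2 h3 unfolding e3_def by linarith
qed


locale setting =
  fixes j l \<delta> c1 c2 B :: real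
  assumes j: "j \<ge> 1/2" and l: "0 < l" "l < 1" and dl: "0 < \<delta>" "\<delta> < 1" and c: "0 < c1" "0 < c2"
    and Fp: "\<forall>x. 0 < x \<longrightarrow> x < \<delta> \<longrightarrow> (\<exists>D. (Fl l has_real_derivative D) (at x) \<and>
         0 \<le> x * D \<and> x * D \<le> 3 * (1/(1-l)) * Fl l x) \<and>
         c1 * x powr (1/(1-l)) \<le> Fl l x \<and> Fl l x \<le> c2 * x powr (1/(1-l))"
    and B: "0 \<le> B"
begin

definition "p = 1/(1-l)"
definition "P = 3*p"
definition "K = exp (6*B)"
definition "m = c1 / (c2 * K powr p)"
definition "C2 = 3*(9/2 + 3*(2+2*P)) + 3*(2+P)"
definition "eps1 = (3/2) * m / K^3 / C2"
definition "tau0 = min (\<delta>/2) (min (1/c2) eps1)"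
definition "T s = Qf j s * exp (3*B)"
definition "X1 s x y = Qf j s * exp (e1 x y)"
definition "X2 s x y = Qf j s * exp (e2 x y)"
definition "X3 s x y = Qf j s * exp (e3 x y)"
definition "gf z = z * deriv (Fl l) z"
definition "DWat a1 a2 a3 s x y = DWV j a1 a2 a3 (X1 s x y) (X2 s x y) (X3 s x y)
    (Fl l (X1 s x y)) (Fl l (X2 s x y)) (Fl l (X3 s x y)) (gf (X1 s x y)) (gf (X2 s x y)) (gf (X3 s x y))"
definition "Ca = 8*j^2*(3*(8*2 + 4*((2+2*P)*2)))"
definition "Cw = 8*j^2*12"

lemma p: "p \<ge> 1" using l by (simp add: p_def field_simps)
lemma P: "P \<ge> 0" using p by (simp add: P_def)
lemma K: "K \<ge> 1" using B by (simp add: K_def)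
lemma m: "m > 0" using c K by (simp add: m_def)
lemma C2: "C2 > 0" using P by (simp add: C2_def)
lemma eps1: "eps1 > 0" using m K C2 by (simp add: eps1_def)
lemma tau0: "tau0 > 0" "tau0 < \<delta>" "tau0 \<le> 1/c2" "tau0 \<le> eps1" "tau0 \<le> 1"
  using dl c eps1 by (auto simp: tau0_def)
lemma Q: "Qf j s > 0" using j by (simp add: Qf_def)
lemma Ca: "Ca \<ge> 0" using P by (simp add: Ca_def)
lemma Cw: "Cw \<ge> 0" by (simp add: Cw_def)

lemma Xb:
  assumes "\<bar>e\<bar> \<le> 3*B" "T s \<le> tau0"
  shows "0 < Qf j s * exp e" "Qf j s * exp e \<le> T s" "T s \<le> K * (Qf j s * exp e)" "Qf j s * exp e < \<delta>"
proof -
  show "0 < Qf j s * exp e" using Q by simp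
  have "exp e \<le> exp (3*B)" using assms by simp
  then show a: "Qf j s * exp e \<le> T s" unfolding T_def using Q[of s] by (intro mult_left_mono) auto
  have "exp (3*B) \<le> exp (6*B) * exp e" unfolding exp_add[symmetric] using assms by simp
  then have "Qf j s * exp (3*B) \<le> Qf j s * (exp (6*B) * exp e)" using Q[of s] by (intro mult_left_mono) auto
  then show "T s \<le> K * (Qf j s * exp e)" unfolding T_def K_def by (simp add: algebra_simps)
  show "Qf j s * exp e < \<delta>" using a assms tau0 by linarith
qed

lemma Fpt:
  assumes "0 < z" "z < \<delta>" "z \<le> t" "t \<le> K * z"
  shows "(Fl l has_real_derivative deriv (Fl l) z) (at z)" "0 \<le> gf z" "gf z \<le> P * Fl l z"
    "0 \<le> Fl l z" "Fl l z \<le> c2 * t powr p" "m * (c2 * t powr p) \<le> Fl l z"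
proof -
  obtain D where D: "(Fl l has_real_derivative D) (at z)" "0 \<le> z * D" "z * D \<le> 3 * p * Fl l z"
    and F: "c1 * z powr p \<le> Fl l z" "Fl l z \<le> c2 * z powr p"
    using Fp assms unfolding p_def by blast
  have dd: "deriv (Fl l) z = D" using D(1) by (rule DERIV_imp_deriv)
  show "(Fl l has_real_derivative deriv (Fl l) z) (at z)" using D dd by simp
  show "0 \<le> gf z" "gf z \<le> P * Fl l z" using D dd by (auto simp: gf_def P_def)
  show "0 \<le> Fl l z" using F c assms by (smt (verit) mult_pos_pos powr_gt_zero)
  have "z powr p \<le> t powr p" using assms p by (intro powr_mono2) auto
  then show "Fl l z \<le> c2 * t powr p" using F c by (smt (verit) mult_left_mono)
  have tz: "t / K \<le> z" using assms K by (simp add: divide_le_eq mult.commute)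
  have "(t / K) powr p \<le> z powr p" using tz assms p K by (intro powr_mono2) auto
  then have "c1 * (t / K) powr p \<le> c1 * z powr p" using c by simp
  moreover have "c1 * (t / K) powr p = m * (c2 * t powr p)"
    using c K by (simp add: m_def powr_divide field_simps)
  ultimately show "m * (c2 * t powr p) \<le> Fl l z" using F by linarith
qed

lemma good:
  assumes xy: "\<bar>x\<bar> \<le> B" "\<bar>y\<bar> \<le> B" and Ts: "T s \<le> tau0"
  shows "0 < X1 s x y" "X1 s x y < \<delta>" "0 < X2 s x y" "X2 s x y < \<delta>" "0 < X3 s x y" "X3 s x y < \<delta>"
    "(Fl l has_real_derivative deriv (Fl l) (X1 s x y)) (at (X1 s x y))"
    "(Fl l has_real_derivative deriv (Fl l) (X2 s x y)) (at (X2 s x y))"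
    "(Fl l has_real_derivative deriv (Fl l) (X3 s x y)) (at (X3 s x y))"
    "DWat 1 1 1 s x y \<le> 0"
    "\<And>a1 a2 a3. \<bar>a1\<bar> \<le> 2 \<Longrightarrow> \<bar>a2\<bar> \<le> 2 \<Longrightarrow> \<bar>a3\<bar> \<le> 2 \<Longrightarrow> \<bar>DWat a1 a2 a3 s x y\<bar> \<le> Ca * T s"
    "\<bar>Wq j l s x y\<bar> \<le> Cw * T s"
proof -
  note eb = e_bounds[OF xy]
  note b1 = Xb[OF eb(1) Ts, folded X1_def]
  note b2 = Xb[OF eb(2) Ts, folded X2_def]
  note b3 = Xb[OF eb(3) Ts, folded X3_def]
  show "0 < X1 s x y" "X1 s x y < \<delta>" "0 < X2 s x y" "X2 s x y < \<delta>" "0 < X3 s x y" "X3 s x y < \<delta>"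
    using b1 b2 b3 by auto
  note F1 = Fpt[OF b1(1) b1(4) b1(2) b1(3)]
  note F2 = Fpt[OF b2(1) b2(4) b2(2) b2(3)]
  note F3 = Fpt[OF b3(1) b3(4) b3(2) b3(3)]
  show "(Fl l has_real_derivative deriv (Fl l) (X1 s x y)) (at (X1 s x y))"
    "(Fl l has_real_derivative deriv (Fl l) (X2 s x y)) (at (X2 s x y))"
    "(Fl l has_real_derivative deriv (Fl l) (X3 s x y)) (at (X3 s x y))"
    using F1 F2 F3 by auto
  define t where "t = T s"
  define \<phi> where "\<phi> = c2 * t powr p"
  have t0: "0 < t" using b1 t_def by linarith
  have t1: "t \<le> 1" using Ts tau0 t_def by linarith
  have "t powr p \<le> t" using t0 t1 p by (intro powr_le_one_le) auto
  then have "\<phi> \<le> c2 * t" unfolding \<phi>_def using c by simp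
  also have "\<dots> \<le> c2 * (1/c2)" using Ts tau0 c t_def by (intro mult_left_mono) auto
  finally have p1: "\<phi> \<le> 1" using c by simp
  have p0: "0 \<le> \<phi>" using c by (simp add: \<phi>_def)
  interpret bn: bnds "X1 s x y" "X2 s x y" "X3 s x y" "Fl l (X1 s x y)" "Fl l (X2 s x y)" "Fl l (X3 s x y)"
    "gf (X1 s x y)" "gf (X2 s x y)" "gf (X3 s x y)" t \<phi> P
    using b1 b2 b3 F1 F2 F3 t1 p1 P unfolding t_def \<phi>_def by unfold_locales auto
  have t3: "t^3 * \<phi> \<le> t"
  proof -
    have "t^2 * \<phi> \<le> 1 * 1" using t0 t1 p0 p1 by (intro mult_mono) (auto simp: power_le_one)
    then have "t * (t^2 * \<phi>) \<le> t * 1" using t0 by (intro mult_left_mono) auto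
    then show ?thesis by (simp add: power3_eq_cube power2_eq_square algebra_simps)
  qed
  show "\<bar>DWat a1 a2 a3 s x y\<bar> \<le> Ca * T s" if "\<bar>a1\<bar> \<le> 2" "\<bar>a2\<bar> \<le> 2" "\<bar>a3\<bar> \<le> 2" for a1 a2 a3
  proof -
    have "\<bar>DWat a1 a2 a3 s x y\<bar> \<le> Ca * (t^3 * \<phi>)"
      using bn.DW_bound[OF that, of j] unfolding DWat_def Ca_def by (simp add: mult.assoc)
    also have "\<dots> \<le> Ca * t" using t3 Ca by (intro mult_left_mono) auto
    finally show ?thesis by (simp add: t_def)
  qed
  show "\<bar>Wq j l s x y\<bar> \<le> Cw * T s"
  proof -
    have "\<bar>Wq j l s x y\<bar> \<le> Cw * (t^3 * \<phi>)"
      using bn.W_bound[of j] unfolding Wq_eq Wmu_WV Cw_def X1_def X2_def X3_def by (simp add: mult.assoc)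
    also have "\<dots> \<le> Cw * t" using t3 Cw by (intro mult_left_mono) auto
    finally show ?thesis by (simp add: t_def)
  qed
  show "DWat 1 1 1 s x y \<le> 0"
  proof -
    have xl: "t / K \<le> X1 s x y" "t / K \<le> X2 s x y" using b1 b2 K by (auto simp: t_def divide_le_eq mult.commute)
    have tk: "0 \<le> t / K" using t0 K by simp
    have "(t/K) * (t/K) \<le> X1 s x y * X2 s x y" using xl tk by (intro mult_mono) auto
    then have "(t/K) * (t/K) * (t/K) \<le> X1 s x y * X2 s x y * X2 s x y" using xl tk b1 b2
      by (intro mult_mono) auto
    then have "(t/K)^3 * (m * \<phi>) \<le> X1 s x y * X2 s x y * X2 s x y * Fl l (X1 s x y)"
      using F1 m p0 tk b1 b2 unfolding \<phi>_def t_def[symmetric] by (intro mult_mono) (auto simp: power3_eq_cube)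
    then have low: "(t/K)^3 * (m * \<phi>) \<le> X1 s x y * X2 s x y * (X2 s x y * Fl l (X1 s x y))"
      by (simp add: mult.assoc)
    have "t * \<phi> \<le> t" using t0 p1 by (simp add: mult_le_cancel_left1)
    also have "\<dots> \<le> eps1" using Ts tau0 t_def by linarith
    finally have tpe: "t * \<phi> \<le> eps1" .
    have "C2 * (t^4 * \<phi>^2) = (C2 * (t * \<phi>)) * (t^3 * \<phi>)"
      by (simp add: power2_eq_square power3_eq_cube power4_eq_xxxx)
    also have "\<dots> \<le> (C2 * eps1) * (t^3 * \<phi>)" using tpe C2 t0 p0 by (intro mult_right_mono mult_left_mono) auto
    also have "C2 * eps1 = (3/2) * m / K^3" using C2 by (simp add: eps1_def)
    finally have hi: "C2 * (t^4 * \<phi>^2) \<le> (3/2) * ((t/K)^3 * (m * \<phi>))"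
      by (simp add: power_divide algebra_simps)
    have "DWat 1 1 1 s x y \<le> 8*j^2 * (-(3/2)*(X1 s x y * X2 s x y * (X2 s x y * Fl l (X1 s x y))) + C2 * (t^4*\<phi>^2))"
      using bn.DW_sign[of j] unfolding DWat_def C2_def by simp
    also have "\<dots> \<le> 8*j^2 * 0" using low hi by (intro mult_left_mono) auto
    finally show ?thesis by simp
  qed
qed

end


context setting begin

lemma sq: "sqrt 3 * sqrt 3 = 3" "sqrt 6 * sqrt 6 = 6" "sqrt 2 * sqrt 2 = 2" "j \<noteq> 0"
  "sqrt 3 ^ 2 = 3" "sqrt 6 ^ 2 = 6" "sqrt 2 ^ 2 = 2"
  using j by auto

lemma dQ: "((\<lambda>u. Qf j u) has_real_derivative (2 / sqrt 3) * Qf j u0) (at u0)"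
  unfolding Qf_def by (auto intro!: derivative_eq_intros simp: field_simps sq)

lemma dQE:
  assumes "(E has_real_derivative a) (at s)"
  shows "((\<lambda>s. Qf j s * exp (E s)) has_real_derivative ((2/sqrt 3)*1 + a) * (Qf j s * exp (E s))) (at s)"
proof -
  have "((\<lambda>s. exp (E s)) has_real_derivative exp (E s) * a) (at s)"
    using DERIV_chain2[OF DERIV_exp assms] .
  from DERIV_mult[OF dQ this] show ?thesis by (simp add: algebra_simps)
qed

lemma dWx:
  assumes "\<bar>x\<bar> \<le> B" "\<bar>y\<bar> \<le> B" "T s \<le> tau0"
  shows "((\<lambda>x. Wq j l s x y) has_real_derivative DWat (4/sqrt 6) (-(2/sqrt 6)) (-(2/sqrt 6)) s x y) (at x)"
proof -
  note g = good[OF assms]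
  have d1: "((\<lambda>x. X1 s x y) has_real_derivative (4/sqrt 6) * X1 s x y) (at x)"
    unfolding X1_def e1_def by (auto intro!: derivative_eq_intros simp: field_simps sq)
  have d2: "((\<lambda>x. X2 s x y) has_real_derivative (-(2/sqrt 6)) * X2 s x y) (at x)"
    unfolding X2_def e2_def by (auto intro!: derivative_eq_intros simp: field_simps sq)
  have d3: "((\<lambda>x. X3 s x y) has_real_derivative (-(2/sqrt 6)) * X3 s x y) (at x)"
    unfolding X3_def e3_def by (auto intro!: derivative_eq_intros simp: field_simps sq)
  have "((\<lambda>x. Wmu j l (X1 s x y) (X2 s x y) (X3 s x y)) has_real_derivative DWat (4/sqrt 6) (-(2/sqrt 6)) (-(2/sqrt 6)) s x y) (at x)"
    using Wmu_deriv[OF d1 d2 d3 g(7) g(8) g(9)] unfolding DWat_def gf_def .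
  then show ?thesis unfolding Wq_eq X1_def X2_def X3_def .
qed

lemma dWy:
  assumes "\<bar>x\<bar> \<le> B" "\<bar>y\<bar> \<le> B" "T s \<le> tau0"
  shows "((\<lambda>y. Wq j l s x y) has_real_derivative DWat 0 (sqrt 2) (-sqrt 2) s x y) (at y)"
proof -
  note g = good[OF assms]
  have d1: "((\<lambda>y. X1 s x y) has_real_derivative 0 * X1 s x y) (at y)"
    unfolding X1_def e1_def by (auto intro!: derivative_eq_intros simp: field_simps sq)
  have d2: "((\<lambda>y. X2 s x y) has_real_derivative (sqrt 2) * X2 s x y) (at y)"
    unfolding X2_def e2_def by (auto intro!: derivative_eq_intros simp: field_simps sq)
  have d3: "((\<lambda>y. X3 s x y) has_real_derivative (-sqrt 2) * X3 s x y) (at y)"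
    unfolding X3_def e3_def by (auto intro!: derivative_eq_intros simp: field_simps sq)
  have "((\<lambda>y. Wmu j l (X1 s x y) (X2 s x y) (X3 s x y)) has_real_derivative DWat 0 (sqrt 2) (-sqrt 2) s x y) (at y)"
    using Wmu_deriv[OF d1 d2 d3 g(7) g(8) g(9)] unfolding DWat_def gf_def .
  then show ?thesis unfolding Wq_eq X1_def X2_def X3_def .
qed

lemma dWs:
  assumes "\<bar>qp s\<bar> \<le> B" "\<bar>qm s\<bar> \<le> B" "T s \<le> tau0"
    and vp: "(qp has_real_derivative vp) (at s)" and vm: "(qm has_real_derivative vm) (at s)"
  shows "((\<lambda>s. Wq j l s (qp s) (qm s)) has_real_derivative
     (2/sqrt 3) * DWat 1 1 1 s (qp s) (qm s) + vp * DWat (4/sqrt 6) (-(2/sqrt 6)) (-(2/sqrt 6)) s (qp s) (qm s)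
      + vm * DWat 0 (sqrt 2) (-sqrt 2) s (qp s) (qm s)) (at s)"
proof -
  note g = good[OF assms(1-3)]
  have e1d: "((\<lambda>s. e1 (qp s) (qm s)) has_real_derivative vp*(4/sqrt 6) + vm*0) (at s)"
    unfolding e1_def using DERIV_cmult[OF vp, of "4/sqrt 6"] by (simp add: mult.commute)
  have d1: "((\<lambda>s. X1 s (qp s) (qm s)) has_real_derivative ((2/sqrt 3)*1 + vp*(4/sqrt 6) + vm*0) * X1 s (qp s) (qm s)) (at s)"
    using dQE[OF e1d] unfolding X1_def by (simp only: add.assoc)
  have e2d: "((\<lambda>s. e2 (qp s) (qm s)) has_real_derivative vp*(-(2/sqrt 6)) + vm*(sqrt 2)) (at s)"
    unfolding e2_def using DERIV_add[OF DERIV_cmult[OF vp, of "-(2/sqrt 6)"] DERIV_cmult[OF vm, of "sqrt 2"]] by (simp add: mult.commute)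
  have d2: "((\<lambda>s. X2 s (qp s) (qm s)) has_real_derivative ((2/sqrt 3)*1 + vp*(-(2/sqrt 6)) + vm*(sqrt 2)) * X2 s (qp s) (qm s)) (at s)"
    using dQE[OF e2d] unfolding X2_def by (simp only: add.assoc)
  have e3d: "((\<lambda>s. e3 (qp s) (qm s)) has_real_derivative vp*(-(2/sqrt 6)) + vm*(-sqrt 2)) (at s)"
    unfolding e3_def using DERIV_diff[OF DERIV_cmult[OF vp, of "-(2/sqrt 6)"] DERIV_cmult[OF vm, of "sqrt 2"]] by (simp add: mult.commute)
  have d3: "((\<lambda>s. X3 s (qp s) (qm s)) has_real_derivative ((2/sqrt 3)*1 + vp*(-(2/sqrt 6)) + vm*(-sqrt 2)) * X3 s (qp s) (qm s)) (at s)"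
    using dQE[OF e3d] unfolding X3_def by (simp only: add.assoc)
  have "((\<lambda>s. Wmu j l (X1 s (qp s) (qm s)) (X2 s (qp s) (qm s)) (X3 s (qp s) (qm s))) has_real_derivative
     DWat ((2/sqrt 3)*1 + vp*(4/sqrt 6) + vm*0) ((2/sqrt 3)*1 + vp*(-(2/sqrt 6)) + vm*(sqrt 2))
       ((2/sqrt 3)*1 + vp*(-(2/sqrt 6)) + vm*(-sqrt 2)) s (qp s) (qm s)) (at s)"
    using Wmu_deriv[OF d1 d2 d3 g(7) g(8) g(9)] unfolding DWat_def gf_def .
  then show ?thesis unfolding Wq_eq X1_def X2_def X3_def DWat_def DWV_lin .
qed

end


lemma within_at:
  assumes "(f has_real_derivative D) (at s within {..q})" "s < q"
  shows "(f has_real_derivative D) (at s)"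
proof -
  have "s \<in> interior {..q}" using interior_maximal[of "{..<q}" "{..q}"] assms(2) by auto
  then show ?thesis using assms(1) at_within_interior by metis
qed

context setting begin

definition "kap = 2 / sqrt 3"
definition "T0 = exp (3*B) / (2*j)"

lemma kap: "kap > 0" by (simp add: kap_def)
lemma T0: "T0 > 0" using j by (simp add: T0_def)
lemma T_eq: "T s = T0 * exp (kap * s)" by (simp add: T_def T0_def Qf_def kap_def)
lemma T_pos: "T s > 0" using T0 by (simp add: T_eq)
lemma T_mono: "s \<le> s' \<Longrightarrow> T s \<le> T s'" using T0 kap by (simp add: T_eq)
lemma T_deriv: "(T has_real_derivative kap * T s) (at s)"
  unfolding T_eq[abs_def] by (auto intro!: derivative_eq_intros simp: T_eq algebra_simps)

lemma T_small:
  assumes "\<tau> > 0"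
  shows "\<exists>s4 \<le> S'. \<forall>s \<le> s4. T s \<le> \<tau>"
proof (intro exI[of _ "min S' (ln (\<tau> / T0) / kap)"] conjI allI impI)
  fix s assume s: "s \<le> min S' (ln (\<tau> / T0) / kap)"
  then have "kap * s \<le> ln (\<tau> / T0)" using kap by (simp add: field_simps)
  then have "exp (kap * s) \<le> \<tau> / T0" using assms T0 by (metis exp_le_cancel_iff exp_ln divide_pos_pos)
  then show "T s \<le> \<tau>" using T0 by (simp add: T_eq field_simps)
qed simp

lemma coef: "\<bar>4/sqrt 6\<bar> \<le> 2" "\<bar>-(2/sqrt 6)\<bar> \<le> 2" "\<bar>0::real\<bar> \<le> 2" "\<bar>sqrt 2\<bar> \<le> 2" "\<bar>-sqrt 2\<bar> \<le> 2"
proof -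
  have s6: "sqrt 6 \<ge> 2" by (rule real_le_rsqrt) simp
  have s2: "sqrt 2 \<le> 2" by (rule power2_le_imp_le) (simp_all add: power2_eq_square)
  have p6: "0 < sqrt 6" by simp
  show "\<bar>4/sqrt 6\<bar> \<le> 2" "\<bar>-(2/sqrt 6)\<bar> \<le> 2" using s6 p6 by (simp_all add: divide_le_eq)
  show "\<bar>0::real\<bar> \<le> 2" by simp
  show "\<bar>sqrt 2\<bar> \<le> 2" "\<bar>-sqrt 2\<bar> \<le> 2" using s2 by simp_all
qed


lemma osc:
  assumes "s \<le> s4" "M \<ge> 0"
    and d: "\<And>\<sigma>. s \<le> \<sigma> \<Longrightarrow> \<sigma> \<le> s4 \<Longrightarrow> (f has_real_derivative f' \<sigma>) (at \<sigma>)"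
    and b: "\<And>\<sigma>. s \<le> \<sigma> \<Longrightarrow> \<sigma> \<le> s4 \<Longrightarrow> \<bar>f' \<sigma>\<bar> \<le> M * kap * T \<sigma>"
  shows "\<bar>f s - f s4\<bar> \<le> M * T s4"
proof -
  have "(\<lambda>\<sigma>. f \<sigma> + M * T \<sigma>) s \<le> (\<lambda>\<sigma>. f \<sigma> + M * T \<sigma>) s4"
  proof (rule DERIV_nonneg_imp_nondecreasing[OF assms(1)])
    fix \<sigma> assume "s \<le> \<sigma>" "\<sigma> \<le> s4"
    then show "\<exists>y. ((\<lambda>\<sigma>. f \<sigma> + M * T \<sigma>) has_real_derivative y) (at \<sigma>) \<and> 0 \<le> y"
      using DERIV_add[OF d[of \<sigma>] DERIV_cmult[OF T_deriv[of \<sigma>], of M]] b[of \<sigma>]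
      by (intro exI[of _ "f' \<sigma> + M * (kap * T \<sigma>)"] conjI) (auto simp: abs_le_iff mult.assoc)
  qed
  moreover have "(\<lambda>\<sigma>. f \<sigma> - M * T \<sigma>) s4 \<le> (\<lambda>\<sigma>. f \<sigma> - M * T \<sigma>) s"
  proof (rule deriv_nonpos_imp_antimono[OF _ _ assms(1)])
    fix \<sigma> assume "\<sigma> \<in> {s..s4}"
    then show "((\<lambda>\<sigma>. f \<sigma> - M * T \<sigma>) has_real_derivative f' \<sigma> - M * (kap * T \<sigma>)) (at \<sigma>)"
      "f' \<sigma> - M * (kap * T \<sigma>) \<le> 0"
      using DERIV_diff[OF d[of \<sigma>] DERIV_cmult[OF T_deriv[of \<sigma>], of M]] b[of \<sigma>]
      by (auto simp: abs_le_iff mult.assoc)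
  qed
  moreover have "0 \<le> M * T s" using assms T_pos[of s] by simp
  ultimately show ?thesis by (simp add: abs_le_iff)
qed

end


lemma keyineq:
  fixes a b x y \<eta> :: real
  assumes "\<bar>x - a\<bar> \<le> \<eta>" "\<bar>y - b\<bar> \<le> \<eta>" "0 \<le> \<eta>" "16 * \<eta>^2 \<le> a^2 + b^2"
  shows "a * x + b * y \<ge> (a^2 + b^2) / 2"
proof -
  define N where "N = a^2 + b^2"
  have N: "0 \<le> N" by (simp add: N_def)
  have e2: "\<eta>^2 \<le> N / 16" using assms(4) by (simp add: N_def)
  have t1: "\<bar>a * (x - a)\<bar> \<le> \<bar>a\<bar> * \<eta>" unfolding abs_mult using assms(1) by (rule mult_left_mono) simp
  have t2: "\<bar>b * (y - b)\<bar> \<le> \<bar>b\<bar> * \<eta>" unfolding abs_mult using assms(2) by (rule mult_left_mono) simp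
  have ab: "(\<bar>a\<bar> + \<bar>b\<bar>)^2 \<le> 2 * N"
  proof -
    have "(\<bar>a\<bar> + \<bar>b\<bar>)^2 + (\<bar>a\<bar> - \<bar>b\<bar>)^2 = 2 * (\<bar>a\<bar>^2 + \<bar>b\<bar>^2)" by (simp add: power2_eq_square algebra_simps)
    moreover have "0 \<le> (\<bar>a\<bar> - \<bar>b\<bar>)^2" by (rule zero_le_power2)
    ultimately show ?thesis unfolding N_def power2_abs by linarith
  qed
  have "((\<bar>a\<bar> + \<bar>b\<bar>) * \<eta>)^2 = (\<bar>a\<bar> + \<bar>b\<bar>)^2 * \<eta>^2" by (rule power_mult_distrib)
  also have "\<dots> \<le> (2 * N) * (N / 16)" by (rule mult_mono[OF ab e2]) (use N in auto)
  also have "\<dots> = N * N / 8" by simp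
  also have "\<dots> \<le> N * N / 4" using N by (simp add: divide_left_mono)
  also have "\<dots> = (N / 2)^2" by (simp add: power2_eq_square)
  finally have "(\<bar>a\<bar> + \<bar>b\<bar>) * \<eta> \<le> N / 2" by (rule power2_le_imp_le) (use N in simp)
  moreover have "a * x + b * y = N + a * (x - a) + b * (y - b)" unfolding N_def by (simp add: power2_eq_square algebra_simps)
  moreover have "-(\<bar>a\<bar> * \<eta>) \<le> a * (x - a)" using t1 unfolding abs_le_iff by linarith
  moreover have "-(\<bar>b\<bar> * \<eta>) \<le> b * (y - b)" using t2 unfolding abs_le_iff by linarith
  ultimately have "a * x + b * y \<ge> N / 2" by (simp add: algebra_simps)
  then show ?thesis by (simp add: N_def)
qed

context setting begin

lemma main:
  fixes q01 q02 :: real and qp qm pp pm :: "real \<Rightarrow> real"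
  assumes hpos: "\<And>t. t \<le> q01 \<Longrightarrow> hq j l t (qp t) (qm t) (pp t) (pm t) > 0"
    and dqp: "\<And>t. t \<le> q01 \<Longrightarrow>
       (qp has_real_derivative pp t / (2 * sqrt (hq j l t (qp t) (qm t) (pp t) (pm t)))) (at t within {..q01})"
    and dqm: "\<And>t. t \<le> q01 \<Longrightarrow>
       (qm has_real_derivative pm t / (2 * sqrt (hq j l t (qp t) (qm t) (pp t) (pm t)))) (at t within {..q01})"
    and dpp: "\<And>t. t \<le> q01 \<Longrightarrow>
       (pp has_real_derivative - deriv (\<lambda>x. Wq j l t x (qm t)) (qp t) / sqrt (hq j l t (qp t) (qm t) (pp t) (pm t)))
         (at t within {..q01})"
    and dpm: "\<And>t. t \<le> q01 \<Longrightarrow>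
       (pm has_real_derivative - deriv (\<lambda>x. Wq j l t (qp t) x) (qm t) / sqrt (hq j l t (qp t) (qm t) (pp t) (pm t)))
         (at t within {..q01})"
    and q02: "q02 \<le> q01" and bnd: "\<And>t. t \<le> q02 \<Longrightarrow> \<bar>qp t\<bar> \<le> B \<and> \<bar>qm t\<bar> \<le> B"
  shows False
proof -
  define h where "h s = hq j l s (qp s) (qm s) (pp s) (pm s)" for s
  define Da where "Da s = DWat (4/sqrt 6) (-(2/sqrt 6)) (-(2/sqrt 6)) s (qp s) (qm s)" for s
  define Db where "Db s = DWat 0 (sqrt 2) (-sqrt 2) s (qp s) (qm s)" for s
  define D1 where "D1 s = DWat 1 1 1 s (qp s) (qm s)" for s
  obtain S where S: "S \<le> q02 - 1" and TS: "\<And>s. s \<le> S \<Longrightarrow> T s \<le> tau0"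
    using T_small[OF tau0(1), of "q02 - 1"] by auto
  have lt: "s < q01" if "s \<le> S" for s using that S q02 by linarith
  have bq: "\<bar>qp s\<bar> \<le> B" "\<bar>qm s\<bar> \<le> B" if "s \<le> S" for s using bnd[of s] that S by auto
  have hp: "h s > 0" if "s \<le> S" for s using hpos[of s] lt[OF that] by (simp add: h_def)
  have Dqp: "(qp has_real_derivative pp s / (2 * sqrt (h s))) (at s)" if "s \<le> S" for s
    using within_at[OF dqp lt[OF that]] lt[OF that] unfolding h_def by simp
  have Dqm: "(qm has_real_derivative pm s / (2 * sqrt (h s))) (at s)" if "s \<le> S" for s
    using within_at[OF dqm lt[OF that]] lt[OF that] unfolding h_def by simp
  have Dpp: "(pp has_real_derivative - Da s / sqrt (h s)) (at s)" if "s \<le> S" for s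
  proof -
    have "deriv (\<lambda>x. Wq j l s x (qm s)) (qp s) = Da s"
      unfolding Da_def by (rule DERIV_imp_deriv[OF dWx[OF bq(1) bq(2) TS]]) (use that in auto)
    then show ?thesis using within_at[OF dpp lt[OF that]] lt[OF that] unfolding h_def by simp
  qed
  have Dpm: "(pm has_real_derivative - Db s / sqrt (h s)) (at s)" if "s \<le> S" for s
  proof -
    have "deriv (\<lambda>y. Wq j l s (qp s) y) (qm s) = Db s"
      unfolding Db_def by (rule DERIV_imp_deriv[OF dWy[OF bq(1) bq(2) TS]]) (use that in auto)
    then show ?thesis using within_at[OF dpm lt[OF that]] lt[OF that] unfolding h_def by simp
  qed
  have h_eq: "h = (\<lambda>s. (1/2) * (pp s * pp s + pm s * pm s) + 2 * Wq j l s (qp s) (qm s))"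
    by (auto simp: h_def hq_def power2_eq_square)
  have Dh: "(h has_real_derivative (4/sqrt 3) * D1 s) (at s)" if "s \<le> S" for s
  proof -
    note DW = dWs[OF bq(1)[OF that] bq(2)[OF that] TS[OF that] Dqp[OF that] Dqm[OF that], folded Da_def Db_def D1_def]
    have "((\<lambda>s. (1/2) * (pp s * pp s + pm s * pm s) + 2 * Wq j l s (qp s) (qm s)) has_real_derivative (1/2) * ((- Da s / sqrt (h s)) * pp s + pp s * (- Da s / sqrt (h s))
        + ((- Db s / sqrt (h s)) * pm s + pm s * (- Db s / sqrt (h s))))
        + 2 * ((2/sqrt 3) * D1 s + pp s / (2 * sqrt (h s)) * Da s + pm s / (2 * sqrt (h s)) * Db s)) (at s)"
      using DERIV_mult[OF Dpp[OF that] Dpp[OF that]] DERIV_mult[OF Dpm[OF that] Dpm[OF that]] DW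
      by (intro DERIV_add DERIV_cmult) auto
    then have "(h has_real_derivative (1/2) * ((- Da s / sqrt (h s)) * pp s + pp s * (- Da s / sqrt (h s))
        + ((- Db s / sqrt (h s)) * pm s + pm s * (- Db s / sqrt (h s))))
        + 2 * ((2/sqrt 3) * D1 s + pp s / (2 * sqrt (h s)) * Da s + pm s / (2 * sqrt (h s)) * Db s)) (at s)"
      unfolding h_eq[symmetric] .
    moreover have "(1/2) * ((- Da s / sqrt (h s)) * pp s + pp s * (- Da s / sqrt (h s))
        + ((- Db s / sqrt (h s)) * pm s + pm s * (- Db s / sqrt (h s))))
        + 2 * ((2/sqrt 3) * D1 s + pp s / (2 * sqrt (h s)) * Da s + pm s / (2 * sqrt (h s)) * Db s) = (4/sqrt 3) * D1 s"
      by (simp add: field_simps)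
    ultimately show ?thesis
      by (rule DERIV_cong)
  qed
  have hmono: "h S \<le> h s" if "s \<le> S" for s
  proof (rule deriv_nonpos_imp_antimono[OF _ _ that])
    fix \<sigma> assume "\<sigma> \<in> {s..S}"
    then have s: "\<sigma> \<le> S" by simp
    note g = good[OF bq(1)[OF s] bq(2)[OF s] TS[OF s]]
    show "(h has_real_derivative (4/sqrt 3) * D1 \<sigma>) (at \<sigma>)" using Dh[OF s] .
    show "(4/sqrt 3) * D1 \<sigma> \<le> 0"
      using g(10) unfolding D1_def by (intro mult_nonneg_nonpos) auto
  qed
  define hS where "hS = h S"
  have hS: "hS > 0" using hp[of S] by (simp add: hS_def)
  define cc where "cc = Ca / (sqrt hS * kap)"
  have cc: "cc \<ge> 0" using Ca hS kap by (simp add: cc_def)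
  have sh: "sqrt (h s) \<ge> sqrt hS" if "s \<le> S" for s using hmono[OF that] by (simp add: hS_def)
  have shp: "sqrt hS > 0" using hS by simp
  have dbound: "\<bar>- D / sqrt (h s)\<bar> \<le> cc * kap * T s" if "s \<le> S" "\<bar>D\<bar> \<le> Ca * T s" for s D
  proof -
    have "\<bar>- D / sqrt (h s)\<bar> = \<bar>D\<bar> / sqrt (h s)" using hp[OF that(1)] by (simp add: abs_div)
    also have "\<dots> \<le> \<bar>D\<bar> / sqrt hS" using sh[OF that(1)] shp by (intro divide_left_mono) auto
    also have "\<dots> \<le> Ca * T s / sqrt hS" using that(2) shp by (intro divide_right_mono) auto
    also have "\<dots> = cc * kap * T s" using kap shp by (simp add: cc_def field_simps)
    finally show ?thesis .
  qed
  have ppb: "\<bar>pp s - pp s4\<bar> \<le> cc * T s4" "\<bar>pm s - pm s4\<bar> \<le> cc * T s4" if "s \<le> s4" "s4 \<le> S" for s s4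
  proof -
    show "\<bar>pp s - pp s4\<bar> \<le> cc * T s4"
    proof (rule osc[OF that(1) cc])
      fix \<sigma> assume "s \<le> \<sigma>" "\<sigma> \<le> s4"
      then have s: "\<sigma> \<le> S" using that by linarith
      note g = good[OF bq(1)[OF s] bq(2)[OF s] TS[OF s]]
      show "(pp has_real_derivative - Da \<sigma> / sqrt (h \<sigma>)) (at \<sigma>)" using Dpp[OF s] .
      show "\<bar>- Da \<sigma> / sqrt (h \<sigma>)\<bar> \<le> cc * kap * T \<sigma>"
        using dbound[OF s g(11)[OF coef(1) coef(2) coef(2)]] unfolding Da_def by simp
    qed
    show "\<bar>pm s - pm s4\<bar> \<le> cc * T s4"
    proof (rule osc[OF that(1) cc])
      fix \<sigma> assume "s \<le> \<sigma>" "\<sigma> \<le> s4"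
      then have s: "\<sigma> \<le> S" using that by linarith
      note g = good[OF bq(1)[OF s] bq(2)[OF s] TS[OF s]]
      show "(pm has_real_derivative - Db \<sigma> / sqrt (h \<sigma>)) (at \<sigma>)" using Dpm[OF s] .
      show "\<bar>- Db \<sigma> / sqrt (h \<sigma>)\<bar> \<le> cc * kap * T \<sigma>"
        using dbound[OF s g(11)[OF coef(3) coef(4) coef(5)]] unfolding Db_def by simp
    qed
  qed
  have Wb: "\<bar>Wq j l s (qp s) (qm s)\<bar> \<le> Cw * T s" if "s \<le> S" for s
    using good(12)[OF bq(1)[OF that] bq(2)[OF that] TS[OF that]] .
  define \<tau> where "\<tau> = min (hS / (4 * Cw + 1)) (sqrt hS / (4 * cc + 1))"
  have \<tau>: "\<tau> > 0" using hS Cw cc shp by (simp add: \<tau>_def)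
  obtain s4 where s4: "s4 \<le> S" and Ts4: "\<And>s. s \<le> s4 \<Longrightarrow> T s \<le> \<tau>"
    using T_small[OF \<tau>, of S] by auto
  have T4: "T s4 \<le> \<tau>" using Ts4 by simp
  have T4p: "T s4 > 0" by (rule T_pos)
  define a where "a = pp s4"
  define b where "b = pm s4"
  define \<eta> where "\<eta> = cc * T s4"
  have \<eta>0: "0 \<le> \<eta>" using cc T4p by (simp add: \<eta>_def)
  have CwT: "4 * (Cw * T s4) \<le> hS"
  proof -
    have "Cw * T s4 \<le> Cw * (hS / (4 * Cw + 1))" using T4 Cw by (intro mult_left_mono) (auto simp: \<tau>_def)
    also have "\<dots> \<le> hS / 4" using Cw hS by (simp add: field_simps)
    finally show ?thesis by simp
  qed
  have \<eta>b: "4 * \<eta> \<le> sqrt hS"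
  proof -
    have "cc * T s4 \<le> cc * (sqrt hS / (4 * cc + 1))" using T4 cc by (intro mult_left_mono) (auto simp: \<tau>_def)
    also have "\<dots> \<le> sqrt hS / 4" using cc shp by (simp add: field_simps)
    finally show ?thesis by (simp add: \<eta>_def)
  qed
  have h4: "h s4 = (a^2 + b^2) / 2 + 2 * Wq j l s4 (qp s4) (qm s4)" by (simp add: h_def hq_def a_def b_def)
  have N0: "hS \<le> (a^2 + b^2) / 2 + 2 * (Cw * T s4)"
    using hmono[OF s4] h4 abs_le_D1[OF Wb[OF s4]] unfolding hS_def[symmetric] by linarith
  have N1: "2 * (Cw * T s4) \<le> hS / 2" using CwT by simp
  have N2: "hS \<le> (a^2 + b^2) / 2 + hS / 2" using N0 N1 by (rule order.trans[OF _ add_left_mono])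
  have N: "hS \<le> a^2 + b^2" using N2 by (simp add: field_simps)
  have \<eta>2: "16 * \<eta>^2 \<le> a^2 + b^2"
  proof -
    have "(4 * \<eta>)^2 \<le> (sqrt hS)^2" using \<eta>b \<eta>0 by (intro power_mono) auto
    then show ?thesis using N hS by (simp add: power_mult_distrib)
  qed
  have close: "\<bar>pp s - a\<bar> \<le> \<eta>" "\<bar>pm s - b\<bar> \<le> \<eta>" if "s \<le> s4" for s
    using ppb[OF that s4] by (auto simp: a_def b_def \<eta>_def)
  define H where "H = ((\<bar>a\<bar> + \<eta>)^2 + (\<bar>b\<bar> + \<eta>)^2) / 2 + 2 * (Cw * T s4)"
  have hH: "h s \<le> H" if "s \<le> s4" for s
  proof -
    have s: "s \<le> S" using that s4 by linarith
    have "\<bar>pp s\<bar> \<le> \<bar>a\<bar> + \<eta>" "\<bar>pm s\<bar> \<le> \<bar>b\<bar> + \<eta>" using close[OF that] by linarith+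
    then have "(pp s)^2 \<le> (\<bar>a\<bar> + \<eta>)^2" "(pm s)^2 \<le> (\<bar>b\<bar> + \<eta>)^2"
      by (metis abs_ge_zero power2_abs power_mono)+
    moreover have "Wq j l s (qp s) (qm s) \<le> Cw * T s4"
      using Wb[OF s] T_mono[OF that] Cw by (smt (verit) mult_left_mono)
    ultimately show ?thesis by (simp add: h_def hq_def H_def field_simps)
  qed
  have Hp: "H > 0" using hH[of s4] hp[OF s4] by simp
  define v where "v = (a^2 + b^2) / (4 * sqrt H)"
  have v: "v > 0" using N hS Hp by (simp add: v_def)
  define \<Phi> where "\<Phi> s = a * qp s + b * qm s" for s
  have \<Phi>mono: "\<Phi> s - v * s \<le> \<Phi> s4 - v * s4" if "s \<le> s4" for s
  proof (rule DERIV_nonneg_imp_nondecreasing[OF that, of "\<lambda>s. \<Phi> s - v * s"])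
    fix \<sigma> assume "s \<le> \<sigma>" "\<sigma> \<le> s4"
    then have s: "\<sigma> \<le> S" and s': "\<sigma> \<le> s4" using s4 by linarith+
    have D: "((\<lambda>s. \<Phi> s - v * s) has_real_derivative
        (a * (pp \<sigma> / (2 * sqrt (h \<sigma>))) + b * (pm \<sigma> / (2 * sqrt (h \<sigma>)))) - v) (at \<sigma>)"
      unfolding \<Phi>_def using Dqp[OF s] Dqm[OF s] by (auto intro!: derivative_eq_intros simp: ac_simps)
    have num: "a * pp \<sigma> + b * pm \<sigma> \<ge> (a^2 + b^2) / 2"
      by (rule keyineq[OF close[OF s'] \<eta>0 \<eta>2])
    have hpos': "0 < sqrt (h \<sigma>)" using hp[OF s] by simp
    have "sqrt (h \<sigma>) \<le> sqrt H" using hH[OF s'] by simp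
    have "v = ((a^2 + b^2) / 2) / (2 * sqrt H)" by (simp add: v_def)
    also have "\<dots> \<le> ((a^2 + b^2) / 2) / (2 * sqrt (h \<sigma>))"
      using \<open>sqrt (h \<sigma>) \<le> sqrt H\<close> hpos' N hS by (intro divide_left_mono) auto
    also have "\<dots> \<le> (a * pp \<sigma> + b * pm \<sigma>) / (2 * sqrt (h \<sigma>))"
      using num hpos' by (intro divide_right_mono) auto
    also have "\<dots> = a * (pp \<sigma> / (2 * sqrt (h \<sigma>))) + b * (pm \<sigma> / (2 * sqrt (h \<sigma>)))"
      by (simp add: add_divide_distrib)
    finally have "0 \<le> (a * (pp \<sigma> / (2 * sqrt (h \<sigma>))) + b * (pm \<sigma> / (2 * sqrt (h \<sigma>)))) - v" by simp
    with D show "\<exists>y. ((\<lambda>s. \<Phi> s - v * s) has_real_derivative y) (at \<sigma>) \<and> 0 \<le> y" by blast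
  qed
  have \<Phi>b: "\<bar>\<Phi> s\<bar> \<le> (\<bar>a\<bar> + \<bar>b\<bar>) * B" if "s \<le> S" for s
  proof -
    have "\<bar>a * qp s\<bar> \<le> \<bar>a\<bar> * B" "\<bar>b * qm s\<bar> \<le> \<bar>b\<bar> * B"
      unfolding abs_mult using bq[OF that] by (auto intro: mult_left_mono)
    then show ?thesis unfolding \<Phi>_def by (simp add: abs_le_iff algebra_simps; linarith?)
  qed
  define s where "s = s4 - (2 * ((\<bar>a\<bar> + \<bar>b\<bar>) * B) + 1) / v"
  have ss: "s \<le> s4" using v B by (simp add: s_def)
  have "v * (s4 - s) = 2 * ((\<bar>a\<bar> + \<bar>b\<bar>) * B) + 1" using v by (simp add: s_def)
  moreover have "\<Phi> s - v * s \<le> \<Phi> s4 - v * s4" by (rule \<Phi>mono[OF ss])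
  moreover have "\<bar>\<Phi> s\<bar> \<le> (\<bar>a\<bar> + \<bar>b\<bar>) * B" using \<Phi>b ss s4 by simp
  moreover have "\<bar>\<Phi> s4\<bar> \<le> (\<bar>a\<bar> + \<bar>b\<bar>) * B" using \<Phi>b s4 by simp
  ultimately show False by (simp add: abs_le_iff algebra_simps; linarith?)
qed

end

theorem proposition1:
  fixes j l q01 :: real and qp qm pp pm :: "real \<Rightarrow> real"
  assumes hj: "\<exists>n::nat. n \<ge> 1 \<and> j = real n / 2"
    and hl: "0 < l" "l < 1"
    and hpos: "\<And>t. t \<le> q01 \<Longrightarrow> hq j l t (qp t) (qm t) (pp t) (pm t) > 0"
    and dqp: "\<And>t. t \<le> q01 \<Longrightarrow>
       (qp has_real_derivative pp t / (2 * sqrt (hq j l t (qp t) (qm t) (pp t) (pm t)))) (at t within {..q01})"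
    and dqm: "\<And>t. t \<le> q01 \<Longrightarrow>
       (qm has_real_derivative pm t / (2 * sqrt (hq j l t (qp t) (qm t) (pp t) (pm t)))) (at t within {..q01})"
    and dpp: "\<And>t. t \<le> q01 \<Longrightarrow>
       (pp has_real_derivative - deriv (\<lambda>x. Wq j l t x (qm t)) (qp t) / sqrt (hq j l t (qp t) (qm t) (pp t) (pm t)))
         (at t within {..q01})"
    and dpm: "\<And>t. t \<le> q01 \<Longrightarrow>
       (pm has_real_derivative - deriv (\<lambda>x. Wq j l t (qp t) x) (qm t) / sqrt (hq j l t (qp t) (qm t) (pp t) (pm t)))
         (at t within {..q01})"
  shows "\<not> (\<exists>q02 \<le> q01. \<exists>B. \<forall>t \<le> q02. sqrt ((qp t)^2 + (qm t)^2) \<le> B)"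
  proof
  assume "\<exists>q02 \<le> q01. \<exists>B. \<forall>t \<le> q02. sqrt ((qp t)^2 + (qm t)^2) \<le> B"
  then obtain q02 B where q02: "q02 \<le> q01" and hB: "\<forall>t \<le> q02. sqrt ((qp t)^2 + (qm t)^2) \<le> B" by blast
  have B0: "0 \<le> B" using hB[rule_format, of q02] by (meson order.trans real_sqrt_ge_zero zero_le_power2 add_nonneg_nonneg order_refl)
  have bnd: "\<bar>qp t\<bar> \<le> B \<and> \<bar>qm t\<bar> \<le> B" if "t \<le> q02" for t
    using hB that real_sqrt_ge_abs1[of "qp t" "qm t"] real_sqrt_ge_abs2[of "qm t" "qp t"] by (meson order.trans)
  obtain n :: nat where n: "n \<ge> 1" "j = real n / 2" using hj by blast
  have j: "j \<ge> 1/2" using n by simp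
  obtain \<delta> c1 c2 where F: "0 < \<delta>" "\<delta> < 1" "0 < c1" "0 < c2"
    "\<forall>x. 0 < x \<longrightarrow> x < \<delta> \<longrightarrow> (\<exists>D. (Fl l has_real_derivative D) (at x) \<and>
         0 \<le> x * D \<and> x * D \<le> 3 * (1/(1-l)) * Fl l x) \<and>
         c1 * x powr (1/(1-l)) \<le> Fl l x \<and> Fl l x \<le> c2 * x powr (1/(1-l))"
    using F_props[OF hl] by blast
  interpret st: setting j l \<delta> c1 c2 B
    using j hl F B0 by unfold_locales auto
  show False
    by (rule st.main[OF hpos dqp dqm dpp dpm q02 bnd]) auto
qed

end
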